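(* Let $n\ge1$, $m\ge1$ be integers, $q=\exp\bigl(\tfrac{2\pi i}{m+n+1}\bigr)$, and consider $$\partial^{n+1}y+(-1)^n\,(x^m+\lambda^{n+1})\,y=0,\qquad \partial=\tfrac{d}{dx},\ \lambda\in\mathbb{C}.$$ Let $y(x,\lambda)$ be a solution for each $\lambda$ (in the paper: the subdominant solution in the sector $|\arg x|\le\pi/(m+n+1)$), put $y_k(x,\lambda)=q^{nk/2}y(xq^{-k},\lambda q^k)$, and assume $y_k,\dots,y_{k+n}$ are linearly independent for every $k\in\mathbb{Z}$. Let $\Phi_k$ be the matrix with $(i+1,j+1)$ entry $\partial^iy_{k+j}$ ($0\le i,j\le n$), let $S^{(\ell)}_k$ ($\ell\ge1$) be defined by $\Phi_k=\Phi_{k+\ell}S^{(\ell)}_k$, let $S^{(\ell)}(\lambda)$ denote $S^{(\ell)}_0$ as a function of $\lambda$ (so $S^{(\ell)}_k=S^{(\ell)}(\lambda q^k)$) with entries $S^{(\ell)}_{i,j}(\lambda)$, and let $\tau^{(a)}(\lambda)=S^{(1)}_{a,1}(\lambda)$. Define $T^{(1)}_\ell(\lambda)=S^{(\ell)}_{1,1}(\lambda q^{-(\ell-1)/2})$ for $\ell\ge1$, $T^{(1)}_0=1$, $T^{(1)}_\ell=0$ for $\ell<0$, and $T^{(a)}_1(\lambda)=(-1)^{a+1}\tau^{(a)}(\lambda q^{-(a-1)/2})$ for $1\le a\le n+1$. Then for every $1\le a\le n+1$, $$T^{(a)}_1(\lambda)=\det_{1\le i,j\le a}\Bigl(T^{(1)}_{1-i+j}\bigl(\lambda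 q^{(i+j-a-1)/2}\bigr)\Bigr).$$
   Context: Fractional powers $q^{s}$ mean $\exp\bigl(\tfrac{2\pi i s}{m+n+1}\bigr)$. The matrices $S^{(\ell)}_k$ are (generalized) Stokes matrices connecting the fundamental systems of solutions $\Phi_k$ and $\Phi_{k+\ell}$, and $\tau^{(a)}$ are the Stokes multipliers (first column of $S^{(1)}$). *)

theory Defs
  imports "HOL-Analysis.Derivative" "Jordan_Normal_Form.Determinant"
begin

text \<open>Fractional powers of q: qp N s = exp(2 pi i s / N), here N = m+n+1.\<close>
definition qp :: "nat \<Rightarrow> real \<Rightarrow> complex" where
  "qp N s = exp (2 * of_real pi * \<i> * of_real s / of_nat N)"

definition yk :: "nat \<Rightarrow> nat \<Rightarrow> (complex \<Rightarrow> complex \<Rightarrow> complex) \<Rightarrow> int \<Rightarrow> complex \<Rightarrow> complex \<Rightarrow> complex" where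
  "yk n m y k x lam = qp (m+n+1) (real n * of_int k / 2) * y (x * qp (m+n+1) (- of_int k)) (lam * qp (m+n+1) (of_int k))"

definition Phi :: "nat \<Rightarrow> nat \<Rightarrow> (complex \<Rightarrow> complex \<Rightarrow> complex) \<Rightarrow> int \<Rightarrow> complex \<Rightarrow> complex \<Rightarrow> complex mat" where
  "Phi n m y k x lam = mat (n+1) (n+1) (\<lambda>(i,j). (deriv ^^ i) (\<lambda>z. yk n m y (k + int j) z lam) x)"

text \<open>T^(1)_l(lam) built from S^(l)_(1,1); S l lam is the Stokes matrix S^(l)(lam) = S^(l)_0.\<close>
definition T1 :: "nat \<Rightarrow> (nat \<Rightarrow> complex \<Rightarrow> complex mat) \<Rightarrow> int \<Rightarrow> complex \<Rightarrow> complex" where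
  "T1 N S l lam = (if l < 0 then 0 else if l = 0 then 1
      else S (nat l) (lam * qp N (- (of_int l - 1) / 2)) $$ (0,0))"

text \<open>T^(a)_1(lam) = (-1)^(a+1) tau^(a)(lam q^(-(a-1)/2)), tau^(a) = S^(1)_(a,1).\<close>
definition Ta1 :: "nat \<Rightarrow> (nat \<Rightarrow> complex \<Rightarrow> complex mat) \<Rightarrow> nat \<Rightarrow> complex \<Rightarrow> complex" where
  "Ta1 N S a lam = (-1) ^ (a+1) * (S 1 (lam * qp N (- (real a - 1) / 2)) $$ (a - 1, 0))"

end

theory Submission
  imports Defs
begin

lemma det_col_lemma:
  fixes F :: "nat \<Rightarrow> nat \<Rightarrow> complex" and coef :: "nat \<Rightarrow> complex"
  assumes a: "a \<ge> 1"
    and low: "\<And>i j. j + 1 < i \<Longrightarrow> F i j = 0"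
    and sub: "\<And>j. F (Suc j) j = 1"
    and last: "\<And>i. i < a \<Longrightarrow> F i (a-1) = (\<Sum>k<a-1. coef k * F i k) + (if i = 0 then t else 0)"
  shows "det (mat a a (\<lambda>(i,j). F i j)) = (-1)^(a-1) * t"
proof -
  define M where "M = mat a a (\<lambda>(i,j). F i j)"
  define M' where "M' = mat a a (\<lambda>(i,j). if j = a-1 then (if i=0 then t else 0) else F i j)"
  define U where "U = mat a a (\<lambda>(i,j). if i = j then 1 else if j = a-1 \<and> i < a-1 then coef i else 0)"
  have MC: "M' \<in> carrier_mat a a" "U \<in> carrier_mat a a" unfolding M'_def U_def by auto
  have aS: "a = Suc (a-1)" using a by simp
  have "M = M' * U"
  proof (rule eq_matI)
    fix i j assume i: "i < dim_row (M' * U)" and j: "j < dim_col (M' * U)"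
    hence i: "i < a" and j: "j < a" unfolding M'_def U_def by auto
    have "(M' * U) $$ (i,j) = (\<Sum>k\<in>{0..<a}. M' $$ (i,k) * U $$ (k,j))"
      using i j MC by (auto simp: scalar_prod_def)
    also have "\<dots> = M $$ (i,j)"
    proof (cases "j = a-1")
      case True
      have "(\<Sum>k\<in>{0..<a}. M' $$ (i,k) * U $$ (k,j)) =
            (\<Sum>k\<in>{0..<a-1}. M' $$ (i,k) * U $$ (k,j)) + M' $$ (i,a-1) * U $$ (a-1,j)"
        by (subst aS, subst sum.atLeast0_lessThan_Suc, simp)
      also have "\<dots> = (\<Sum>k<a-1. coef k * F i k) + (if i = 0 then t else 0)"
        using True i j by (auto simp: M'_def U_def mult.commute intro!: sum.cong)
      also have "\<dots> = M $$ (i,j)" using last[OF i] True i j by (simp add: M_def)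
      finally show ?thesis .
    next
      case False
      have "(\<Sum>k\<in>{0..<a}. M' $$ (i,k) * U $$ (k,j)) = (\<Sum>k\<in>{0..<a}. if k = j then M' $$ (i,k) else 0)"
        using False j by (intro sum.cong) (auto simp: U_def)
      also have "\<dots> = M' $$ (i,j)" using j by simp
      finally show ?thesis using False i j by (simp add: M_def M'_def)
    qed
    finally show "M $$ (i,j) = (M' * U) $$ (i,j)" by simp
  qed (auto simp: M_def M'_def U_def)
  hence "det M = det M' * det U" using MC det_mult by metis
  moreover have "det U = 1"
  proof -
    have "upper_triangular U" unfolding U_def upper_triangular_def by auto
    hence "det U = prod_list (diag_mat U)" using det_upper_triangular MC(2) by blast
    also have "\<dots> = 1" unfolding prod_list_diag_prod by (simp add: U_def)
    finally show ?thesis .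
  qed
  moreover have "det M' = (-1)^(a-1) * t"
  proof -
    have "det M' = (\<Sum>i<a. M' $$ (i,a-1) * cofactor M' i (a-1))"
      using laplace_expansion_column[OF MC(1)] a by simp
    also have "\<dots> = (\<Sum>i<a. if i = 0 then t * cofactor M' 0 (a-1) else 0)"
      by (intro sum.cong) (auto simp: M'_def)
    also have "\<dots> = t * cofactor M' 0 (a-1)" using a by simp
    finally have C: "det M' = t * cofactor M' 0 (a-1)" .
    have "det (mat_delete M' 0 (a-1)) = 1"
    proof -
      have D: "mat_delete M' 0 (a-1) = mat (a-1) (a-1) (\<lambda>(i,j). F (Suc i) j)"
        by (rule eq_matI) (auto simp: mat_delete_def M'_def)
      have "upper_triangular (mat (a-1) (a-1) (\<lambda>(i,j). F (Suc i) j))"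
        unfolding upper_triangular_def
      proof (intro allI impI)
        fix i j assume i: "i < dim_row (mat (a-1) (a-1) (\<lambda>(i,j). F (Suc i) j))" and j: "j < i"
        have "F (Suc i) j = 0" using j by (intro low) simp
        then show "mat (a-1) (a-1) (\<lambda>(i,j). F (Suc i) j) $$ (i,j) = 0" using i j by simp
      qed
      hence "det (mat (a-1) (a-1) (\<lambda>(i,j). F (Suc i) j)) = prod_list (diag_mat (mat (a-1) (a-1) (\<lambda>(i,j). F (Suc i) j)))"
        by (rule det_upper_triangular) auto
      also have "\<dots> = 1" unfolding prod_list_diag_prod by (simp add: sub)
      finally show ?thesis using D by simp
    qed
    then show ?thesis using C by (simp add: cofactor_def)
  qed
  ultimately show ?thesis unfolding M_def by simp
qed


lemma qp_add: "qp N a * qp N b = qp N (a + b)"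
  unfolding qp_def by (simp add: exp_add[symmetric] add_divide_distrib distrib_left distrib_right)

lemma qp_zero[simp]: "qp N 0 = 1"
  unfolding qp_def by simp

lemma qp_mul: "z * qp N a * qp N b = z * qp N (a + b)"
  by (simp add: mult.assoc qp_add)

lemma yk_shift:
  "yk n m y (k + j) x lam = qp (m+n+1) (real n * of_int k / 2) *
     yk n m y j (x * qp (m+n+1) (- of_int k)) (lam * qp (m+n+1) (of_int k))"
proof -
  let ?Q = "qp (m+n+1)"
  have 1: "?Q (real n * of_int (k+j) / 2) = ?Q (real n * of_int k / 2) * ?Q (real n * of_int j / 2)"
    by (simp add: qp_add distrib_left add_divide_distrib)
  have 2: "x * ?Q (- of_int (k+j)) = x * ?Q (- of_int k) * ?Q (- of_int j)"
    by (simp add: qp_mul)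
  have 3: "lam * ?Q (of_int (k+j)) = lam * ?Q (of_int k) * ?Q (of_int j)"
    by (simp add: qp_mul)
  show ?thesis unfolding yk_def 1 2 3 by (simp add: mult.assoc)
qed


theorem mainTheorem3:
  fixes n m :: nat
    and y :: "complex \<Rightarrow> complex \<Rightarrow> complex"
    and S :: "nat \<Rightarrow> complex \<Rightarrow> complex mat"
  assumes n: "n \<ge> 1" and m: "m \<ge> 1"
    and diff: "\<And>lam i x. i \<le> n \<Longrightarrow> ((deriv ^^ i) (\<lambda>z. y z lam)) field_differentiable (at x)"
    and ode: "\<And>lam x. (deriv ^^ (n+1)) (\<lambda>z. y z lam) x
                 + (-1) ^ n * (x ^ m + lam ^ (n+1)) * y x lam = 0"
    and indep: "\<And>k lam c. (\<forall>x. (\<Sum>j\<le>n. c j * yk n m y (k + int j) x lam) = 0)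
                 \<Longrightarrow> (\<forall>j\<le>n. c j = 0)"
    and S_carrier: "\<And>l lam. l \<ge> 1 \<Longrightarrow> S l lam \<in> carrier_mat (n+1) (n+1)"
    and S_def: "\<And>l lam x. l \<ge> 1 \<Longrightarrow> Phi n m y 0 x lam = Phi n m y (int l) x lam * S l lam"
  shows "\<forall>a lam. 1 \<le> a \<and> a \<le> n+1 \<longrightarrow>
           Ta1 (m+n+1) S a lam =
           Determinant.det (mat a a (\<lambda>(i,j). T1 (m+n+1) S (1 - int i + int j)
                   (lam * qp (m+n+1) ((real i + real j + 1 - real a) / 2))))"
proof -
  define N where "N = m+n+1"
  define Q where "Q = qp N"
  define Y where "Y = yk n m y"
  have PhiC: "\<And>k x lam. Phi n m y k x lam \<in> carrier_mat (n+1) (n+1)" by (simp add: Phi_def)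
  have row0: "\<And>k x lam j. j \<le> n \<Longrightarrow> Phi n m y k x lam $$ (0,j) = Y (k + int j) x lam"
    by (simp add: Phi_def Y_def)
  have prod0: "\<And>(A::complex mat) B j. A \<in> carrier_mat (n+1) (n+1) \<Longrightarrow> B \<in> carrier_mat (n+1) (n+1) \<Longrightarrow> j \<le> n
      \<Longrightarrow> (A * B) $$ (0,j) = (\<Sum>i\<le>n. A $$ (0,i) * B $$ (i,j))"
  proof -
    fix A B :: "complex mat" and j assume A: "A \<in> carrier_mat (n+1) (n+1)" and B: "B \<in> carrier_mat (n+1) (n+1)" and j: "j \<le> n"
    have "(A * B) $$ (0,j) = (\<Sum>i\<in>{0..<n+1}. A $$ (0,i) * B $$ (i,j))"
      using A B j by (simp add: scalar_prod_def)
    also have "{0..<n+1} = {..n}" by auto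
    finally show "(A * B) $$ (0,j) = (\<Sum>i\<le>n. A $$ (0,i) * B $$ (i,j))" .
  qed
  have R: "\<And>l lam x j. l \<ge> 1 \<Longrightarrow> j \<le> n \<Longrightarrow>
      Y (int j) x lam = (\<Sum>i\<le>n. S l lam $$ (i,j) * Y (int l + int i) x lam)"
  proof -
    fix l lam x j assume l: "(l::nat) \<ge> 1" and j: "j \<le> n"
    have "Y (int j) x lam = Phi n m y 0 x lam $$ (0,j)" using row0[OF j] by simp
    also have "\<dots> = (Phi n m y (int l) x lam * S l lam) $$ (0,j)" using S_def[OF l] by simp
    also have "\<dots> = (\<Sum>i\<le>n. Phi n m y (int l) x lam $$ (0,i) * S l lam $$ (i,j))"
      using prod0[OF PhiC S_carrier[OF l] j] .
    also have "\<dots> = (\<Sum>i\<le>n. S l lam $$ (i,j) * Y (int l + int i) x lam)"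
      by (intro sum.cong) (auto simp: row0 mult.commute)
    finally show "Y (int j) x lam = (\<Sum>i\<le>n. S l lam $$ (i,j) * Y (int l + int i) x lam)" .
  qed
  have RS: "\<And>k l lam x j. l \<ge> 1 \<Longrightarrow> j \<le> n \<Longrightarrow>
      Y (k + int j) x lam = (\<Sum>i\<le>n. S l (lam * Q (of_int k)) $$ (i,j) * Y (k + (int l + int i)) x lam)"
  proof -
    fix k l lam x j assume l: "(l::nat) \<ge> 1" and j: "j \<le> n"
    let ?c = "Q (real n * of_int k / 2)" and ?x = "x * Q (- of_int k)" and ?l = "lam * Q (of_int k)"
    have "Y (k + int j) x lam = ?c * Y (int j) ?x ?l"
      unfolding Y_def Q_def N_def by (rule yk_shift)
    also have "\<dots> = ?c * (\<Sum>i\<le>n. S l ?l $$ (i,j) * Y (int l + int i) ?x ?l)"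
      using R[OF l j] by simp
    also have "\<dots> = (\<Sum>i\<le>n. S l ?l $$ (i,j) * (?c * Y (int l + int i) ?x ?l))"
      by (simp add: sum_distrib_left algebra_simps)
    also have "\<dots> = (\<Sum>i\<le>n. S l ?l $$ (i,j) * Y (k + (int l + int i)) x lam)"
      unfolding Y_def Q_def N_def by (simp add: yk_shift)
    finally show "Y (k + int j) x lam = (\<Sum>i\<le>n. S l (lam * Q (of_int k)) $$ (i,j) * Y (k + (int l + int i)) x lam)" .
  qed
  have uniq: "\<And>k lam c d i. (\<And>x. (\<Sum>i\<le>n. c i * Y (k + int i) x lam) = (\<Sum>i\<le>n. d i * Y (k + int i) x lam))
      \<Longrightarrow> i \<le> n \<Longrightarrow> c i = d i"
  proof -
    fix k lam c d i assume h: "\<And>x. (\<Sum>i\<le>n. c i * Y (k + int i) x lam) = (\<Sum>i\<le>n. d i * Y (k + int i) x lam)"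
      and i: "(i::nat) \<le> n"
    have "\<forall>x. (\<Sum>j\<le>n. (c j - d j) * yk n m y (k + int j) x lam) = 0"
      using h by (simp add: Y_def left_diff_distrib sum_subtractf)
    from indep[OF this] i show "c i = d i" by simp
  qed
  have S1: "\<And>lam i j. 1 \<le> j \<Longrightarrow> j \<le> n \<Longrightarrow> i \<le> n \<Longrightarrow> S 1 lam $$ (i,j) = (if i = j - 1 then 1 else 0)"
  proof -
    fix lam i j assume j1: "(1::nat) \<le> j" and jn: "j \<le> n" and i: "i \<le> n"
    show "S 1 lam $$ (i,j) = (if i = j - 1 then 1 else 0)"
    proof (rule uniq[where k = 1 and lam = lam, OF _ i])
      fix x
      have "(\<Sum>i\<le>n. S 1 lam $$ (i,j) * Y (1 + int i) x lam) = Y (int j) x lam"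
        using R[of 1 j x lam] jn by simp
      also have "\<dots> = (\<Sum>i\<le>n. (if i = j - 1 then 1 else 0) * Y (1 + int i) x lam)"
      proof -
        have "(\<Sum>i\<le>n. (if i = j - 1 then 1 else 0) * Y (1 + int i) x lam) =
              (\<Sum>i\<le>n. if i = j - 1 then Y (1 + int i) x lam else 0)"
          by (intro sum.cong) auto
        also have "\<dots> = Y (1 + int (j-1)) x lam" using jn by simp
        also have "1 + int (j-1) = int j" using j1 by simp
        finally show ?thesis by simp
      qed
      finally show "(\<Sum>i\<le>n. S 1 lam $$ (i,j) * Y (1 + int i) x lam) =
          (\<Sum>i\<le>n. (if i = j - 1 then 1 else 0) * Y (1 + int i) x lam)" .
    qed
  qed
  have comp: "\<And>l lam r. l \<ge> 1 \<Longrightarrow> r \<le> n \<Longrightarrow>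
      S (Suc l) lam $$ (r,0) = (\<Sum>i\<le>n. S 1 (lam * Q (real l)) $$ (r,i) * S l lam $$ (i,0))"
  proof -
    fix l lam r assume l: "(l::nat) \<ge> 1" and r: "r \<le> n"
    show "S (Suc l) lam $$ (r,0) = (\<Sum>i\<le>n. S 1 (lam * Q (real l)) $$ (r,i) * S l lam $$ (i,0))"
    proof (rule uniq[where k = "int l + 1" and lam = lam, OF _ r])
      fix x
      have A: "\<And>i. i \<le> n \<Longrightarrow> Y (int l + int i) x lam =
          (\<Sum>r\<le>n. S 1 (lam * Q (real l)) $$ (r,i) * Y (int l + 1 + int r) x lam)"
        using RS[where k="int l" and l=1 and lam=lam and x=x] by (simp add: add.assoc)
      have "(\<Sum>r\<le>n. S (Suc l) lam $$ (r,0) * Y (int l + 1 + int r) x lam) = Y (int 0) x lam"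
        using R[of "Suc l" 0 x lam] by (simp add: ac_simps)
      also have "\<dots> = (\<Sum>i\<le>n. S l lam $$ (i,0) * Y (int l + int i) x lam)"
        using R[of l 0 x lam] l by simp
      also have "\<dots> = (\<Sum>i\<le>n. S l lam $$ (i,0) *
           (\<Sum>r\<le>n. S 1 (lam * Q (real l)) $$ (r,i) * Y (int l + 1 + int r) x lam))"
        by (intro sum.cong) (auto simp: A)
      also have "\<dots> = (\<Sum>i\<le>n. \<Sum>r\<le>n. S l lam $$ (i,0) * S 1 (lam * Q (real l)) $$ (r,i) * Y (int l + 1 + int r) x lam)"
        by (simp add: sum_distrib_left mult.assoc)
      also have "\<dots> = (\<Sum>r\<le>n. \<Sum>i\<le>n. S l lam $$ (i,0) * S 1 (lam * Q (real l)) $$ (r,i) * Y (int l + 1 + int r) x lam)"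
        by (rule sum.swap)
      also have "\<dots> = (\<Sum>r\<le>n. (\<Sum>i\<le>n. S 1 (lam * Q (real l)) $$ (r,i) * S l lam $$ (i,0)) * Y (int l + 1 + int r) x lam)"
        by (intro sum.cong refl) (simp add: sum_distrib_left sum_distrib_right mult_ac)
      finally show "(\<Sum>r\<le>n. S (Suc l) lam $$ (r,0) * Y (int l + 1 + int r) x lam) =
          (\<Sum>r\<le>n. (\<Sum>i\<le>n. S 1 (lam * Q (real l)) $$ (r,i) * S l lam $$ (i,0)) * Y (int l + 1 + int r) x lam)" .
    qed
  qed
  define H where "H = (\<lambda>(l::int) lam. if l < 0 then 0 else if l = 0 then 1 else S (nat l) lam $$ (0,0))"
  define tau where "tau = (\<lambda>c lam. S 1 lam $$ (c - 1, 0))"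
  have Hneg: "\<And>l lam. l < 0 \<Longrightarrow> H l lam = 0" by (simp add: H_def)
  have H0: "\<And>lam. H 0 lam = 1" by (simp add: H_def)
  have Hpos: "\<And>l lam. l \<ge> 1 \<Longrightarrow> H (int l) lam = S l lam $$ (0,0)" by (simp add: H_def)
  have v: "\<And>l lam. l \<ge> 1 \<Longrightarrow> \<forall>r\<le>n. S l lam $$ (r,0) =
      (\<Sum>c\<in>{r+1..n+1}. tau c (lam * Q (real l + real r - real c)) * H (int l + int r - int c) lam)"
  proof -
    fix l lam assume "(l::nat) \<ge> 1"
    then show "\<forall>r\<le>n. S l lam $$ (r,0) =
      (\<Sum>c\<in>{r+1..n+1}. tau c (lam * Q (real l + real r - real c)) * H (int l + int r - int c) lam)"
    proof (induct l rule: nat_induct_at_least)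
      case base
      show ?case
      proof (intro allI impI)
        fix r assume r: "r \<le> n"
        have "(\<Sum>c\<in>{r+1..n+1}. tau c (lam * Q (real 1 + real r - real c)) * H (int 1 + int r - int c) lam)
            = tau (r+1) (lam * Q (real 1 + real r - real (r+1))) * H (int 1 + int r - int (r+1)) lam
              + (\<Sum>c\<in>{Suc (r+1)..n+1}. tau c (lam * Q (real 1 + real r - real c)) * H (int 1 + int r - int c) lam)"
          using r by (intro sum.atLeast_Suc_atMost) simp
        also have "(\<Sum>c\<in>{Suc (r+1)..n+1}. tau c (lam * Q (real 1 + real r - real c)) * H (int 1 + int r - int c) lam) = 0"
          by (intro sum.neutral) (auto intro!: Hneg)
        also have "tau (r+1) (lam * Q (real 1 + real r - real (r+1))) * H (int 1 + int r - int (r+1)) lam = S 1 lam $$ (r,0)"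
          by (simp add: tau_def H0 Q_def)
        finally show "S 1 lam $$ (r,0) = (\<Sum>c\<in>{r+1..n+1}. tau c (lam * Q (real 1 + real r - real c)) * H (int 1 + int r - int c) lam)"
          by simp
      qed
    next
      case (Suc l)
      show ?case
      proof (intro allI impI)
        fix r assume r: "r \<le> n"
        have "S (Suc l) lam $$ (r,0) = (\<Sum>i\<le>n. S 1 (lam * Q (real l)) $$ (r,i) * S l lam $$ (i,0))"
          using comp[OF Suc(1) r] .
        also have "\<dots> = (\<Sum>i\<le>n. (if i = 0 then tau (r+1) (lam * Q (real l)) * H (int l) lam else 0)
                       + (if i = r + 1 then S l lam $$ (i,0) else 0))"
        proof (intro sum.cong refl)
          fix i assume i: "i \<in> {..n}"
          show "S 1 (lam * Q (real l)) $$ (r,i) * S l lam $$ (i,0) = (if i = 0 then tau (r+1) (lam * Q (real l)) * H (int l) lam else 0)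
                       + (if i = r + 1 then S l lam $$ (i,0) else 0)"
          proof (cases "i = 0")
            case True then show ?thesis using Hpos[OF Suc(1)] by (simp add: tau_def)
          next
            case False then show ?thesis using S1[of i r "lam * Q (real l)"] i r by auto
          qed
        qed
        also have "\<dots> = tau (r+1) (lam * Q (real l)) * H (int l) lam + (if r + 1 \<le> n then S l lam $$ (r+1,0) else 0)"
          by (simp add: sum.distrib)
        also have "\<dots> = (\<Sum>c\<in>{r+1..n+1}. tau c (lam * Q (real (Suc l) + real r - real c)) * H (int (Suc l) + int r - int c) lam)"
        proof -
          have "(\<Sum>c\<in>{r+1..n+1}. tau c (lam * Q (real (Suc l) + real r - real c)) * H (int (Suc l) + int r - int c) lam)
            = tau (r+1) (lam * Q (real (Suc l) + real r - real (r+1))) * H (int (Suc l) + int r - int (r+1)) lam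
              + (\<Sum>c\<in>{Suc (r+1)..n+1}. tau c (lam * Q (real (Suc l) + real r - real c)) * H (int (Suc l) + int r - int c) lam)"
            using r by (intro sum.atLeast_Suc_atMost) simp
          also have "tau (r+1) (lam * Q (real (Suc l) + real r - real (r+1))) * H (int (Suc l) + int r - int (r+1)) lam
              = tau (r+1) (lam * Q (real l)) * H (int l) lam" by simp
          also have "(\<Sum>c\<in>{Suc (r+1)..n+1}. tau c (lam * Q (real (Suc l) + real r - real c)) * H (int (Suc l) + int r - int c) lam)
              = (if r + 1 \<le> n then S l lam $$ (r+1,0) else 0)"
          proof (cases "r + 1 \<le> n")
            case True
            have "S l lam $$ (r+1,0) = (\<Sum>c\<in>{(r+1)+1..n+1}. tau c (lam * Q (real l + real (r+1) - real c)) * H (int l + int (r+1) - int c) lam)"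
              using Suc(2) True by blast
            also have "\<dots> = (\<Sum>c\<in>{Suc (r+1)..n+1}. tau c (lam * Q (real (Suc l) + real r - real c)) * H (int (Suc l) + int r - int c) lam)"
            proof (rule sum.cong)
              show "{r + 1 + 1..n + 1} = {Suc (r + 1)..n + 1}" by simp
            next
              fix c
              have e1: "real l + real (r+1) - real c = real (Suc l) + real r - real c" by simp
              have e2: "int l + int (r+1) - int c = int (Suc l) + int r - int c" by simp
              show "tau c (lam * Q (real l + real (r+1) - real c)) * H (int l + int (r+1) - int c) lam =
                  tau c (lam * Q (real (Suc l) + real r - real c)) * H (int (Suc l) + int r - int c) lam"
                unfolding e1 e2 ..
            qed
            finally show ?thesis using True by simp
          next
            case False
            then show ?thesis by simp
          qed
          finally show ?thesis by simp
        qed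
        finally show "S (Suc l) lam $$ (r,0) = (\<Sum>c\<in>{r+1..n+1}. tau c (lam * Q (real (Suc l) + real r - real c)) * H (int (Suc l) + int r - int c) lam)" .
      qed
    qed
  qed
  have Hrec: "\<And>l lam. l \<ge> 1 \<Longrightarrow> H (int l) lam =
      (\<Sum>c\<in>{1..n+1}. tau c (lam * Q (real l - real c)) * H (int l - int c) lam)"
    using v Hpos by fastforce
  show ?thesis
  proof (intro allI impI)
    fix a lam assume a: "1 \<le> a \<and> a \<le> n+1"
    hence a1: "1 \<le> a" and an: "a \<le> n+1" by auto
    define p where "p = lam * Q (- (real a - 1) / 2)"
    define F where "F = (\<lambda>i j. H (1 - int i + int j) (p * Q (real i)))"
    define coef where "coef = (\<lambda>k. tau (a - 1 - k) (p * Q (real k + 1)))"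
    have T1eq: "\<And>l mu. T1 N S l mu = H l (mu * Q (- (of_int l - 1) / 2))"
      by (auto simp: T1_def H_def Q_def)
    have ent: "(\<lambda>(i,j). T1 (m+n+1) S (1 - int i + int j) (lam * qp (m+n+1) ((real i + real j + 1 - real a) / 2)))
        = (\<lambda>(i,j). F i j)"
    proof (intro ext, clarify)
      fix i j :: nat
      have "lam * Q ((real i + real j + 1 - real a) / 2) * Q (- (of_int (1 - int i + int j) - 1) / 2)
          = p * Q (real i)"
        unfolding p_def qp_mul Q_def by (simp add: field_simps)
      then show "T1 (m+n+1) S (1 - int i + int j) (lam * qp (m+n+1) ((real i + real j + 1 - real a) / 2)) = F i j"
        using T1eq unfolding F_def N_def Q_def by simp
    qed
    have low: "\<And>i j. j + 1 < i \<Longrightarrow> F i j = 0" unfolding F_def by (intro Hneg) simp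
    have sub: "\<And>j. F (Suc j) j = 1" unfolding F_def using H0 by simp
    have last: "\<And>i. i < a \<Longrightarrow> F i (a-1) = (\<Sum>k<a-1. coef k * F i k) + (if i = 0 then tau a p else 0)"
    proof -
      fix i assume i: "i < a"
      define g where "g = (\<lambda>c. tau c (p * Q (real i) * Q (real (a - i) - real c)) * H (int (a - i) - int c) (p * Q (real i)))"
      have "F i (a-1) = H (int (a - i)) (p * Q (real i))"
        unfolding F_def using i a1 by (simp add: of_nat_diff)
      also have "\<dots> = (\<Sum>c\<in>{1..n+1}. g c)" unfolding g_def using i by (intro Hrec) simp
      also have "{1..n+1} = {1..a-1} \<union> ({a} \<union> {a+1..n+1})" using a1 an by auto
      also have "sum g \<dots> = sum g {1..a-1} + (g a + sum g {a+1..n+1})"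
        using a1 by (subst sum.union_disjoint, auto)+
      also have "sum g {a+1..n+1} = 0" unfolding g_def by (intro sum.neutral) (auto intro!: Hneg)
      also have "g a = (if i = 0 then tau a p else 0)"
        unfolding g_def using i by (auto simp: qp_mul Q_def of_nat_diff H0 intro!: Hneg)
      also have "sum g {1..a-1} = (\<Sum>k<a-1. g (a - 1 - k))"
        by (rule sum.reindex_bij_witness[where i = "\<lambda>c. a - 1 - c" and j = "\<lambda>k. a - 1 - k"]) auto
      also have "(\<Sum>k<a-1. g (a - 1 - k)) = (\<Sum>k<a-1. coef k * F i k)"
      proof (intro sum.cong refl)
        fix k assume k: "k \<in> {..<a-1}"
        have e1: "p * Q (real i) * Q (real (a - i) - real (a - 1 - k)) = p * Q (real k + 1)"
          unfolding Q_def qp_mul using k i by (simp add: of_nat_diff add.commute)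
        have e2: "int (a - i) - int (a - 1 - k) = 1 - int i + int k" using k i by simp
        show "g (a - 1 - k) = coef k * F i k" unfolding g_def coef_def F_def e1 e2 ..
      qed
      finally show "F i (a-1) = (\<Sum>k<a-1. coef k * F i k) + (if i = 0 then tau a p else 0)" by simp
    qed
    have "det (mat a a (\<lambda>(i,j). F i j)) = (-1)^(a-1) * tau a p"
      by (rule det_col_lemma[OF a1 low sub last])
    moreover have "Ta1 (m+n+1) S a lam = (-1)^(a-1) * tau a p"
    proof -
      have "(-1::complex)^(a+1) = (-1)^(a-1)" using a1
        by (metis One_nat_def add_Suc_right le_add_diff_inverse2 neg_one_power_add_eq_neg_one_power_diff)
      then show ?thesis by (simp add: Ta1_def tau_def p_def Q_def N_def)
    qed
    ultimately show "Ta1 (m+n+1) S a lam =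
           Determinant.det (mat a a (\<lambda>(i,j). T1 (m+n+1) S (1 - int i + int j)
                   (lam * qp (m+n+1) ((real i + real j + 1 - real a) / 2))))"
      unfolding ent by simp
  qed
qed

end
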